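(* Let $C$ be an $(n,\alpha,v,\rho)$-FR code, let $k\in\{1,\dots,n\}$ and let $M\in\{1,\dots,v\}$ be an integer with $M\le M_k(C)$ (i.e. a file of size $M$ can be stored using $C$ with reconstruction degree $k$). Then $$k\ \ge\ \left\lceil \frac{n\binom{M-1}{\alpha}}{\binom{v}{\alpha}}\right\rceil+1 .$$
   Context: An incidence structure is a triple $(\mathcal P,\mathcal B,\mathcal I)$ with $\mathcal P$ (points) and $\mathcal B$ (blocks) finite sets and $\mathcal I\subseteq \mathcal P\times\mathcal B$; repeated blocks are allowed. An $(n,\alpha,v,\rho)$-FR code is an incidence structure with $|\mathcal B|=n$, $|\mathcal P|=v$, every point incident with exactly $\rho$ blocks and every block incident with exactly $\alpha$ points. The supported file size is $M_k(C)=\min_{\mathcal K\subseteq\mathcal B,|\mathcal K|=k}|\{p\in\mathcal P:\exists B\in\mathcal K,(p,B)\in\mathcal I\}|$. Binomial coefficients $\binom{a}{b}$ are $0$ when $a<b$. *)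

theory Defs
  imports Complex_Main
begin

text \<open>An incidence structure (P, B, I): finite point set P, finite block set B
  (blocks are labels, so repeated blocks, i.e. blocks with equal point sets,
  are allowed), and incidence relation I \<subseteq> P \<times> B.\<close>

definition FR_code ::
  "'p set \<Rightarrow> 'b set \<Rightarrow> ('p \<times> 'b) set \<Rightarrow> nat \<Rightarrow> nat \<Rightarrow> nat \<Rightarrow> nat \<Rightarrow> bool" where
  "FR_code P B I n \<alpha> v \<rho> \<longleftrightarrow>
     finite P \<and> finite B \<and> I \<subseteq> P \<times> B \<and>
     card B = n \<and> card P = v \<and>
     (\<forall>p\<in>P. card {b\<in>B. (p, b) \<in> I} = \<rho>) \<and>
     (\<forall>b\<in>B. card {p\<in>P. (p, b) \<in> I} = \<alpha>)"

definition file_size :: "'p set \<Rightarrow> 'b set \<Rightarrow> ('p \<times> 'b) set \<Rightarrow> nat \<Rightarrow> nat" where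
  "file_size P B I k =
     Min ((\<lambda>K. card {p\<in>P. \<exists>b\<in>K. (p, b) \<in> I}) ` {K. K \<subseteq> B \<and> card K = k})"

end

theory Submission
  imports Defs
begin

lemma card_supersets:
  assumes fP: "finite P" and AP: "A \<subseteq> P" and le: "card A \<le> m"
  shows "card {S. S \<subseteq> P \<and> card S = m \<and> A \<subseteq> S} = (card P - card A) choose (m - card A)"
proof -
  have fA: "finite A" using fP AP finite_subset by blast
  have eq: "{S. S \<subseteq> P \<and> card S = m \<and> A \<subseteq> S} = (\<lambda>T. T \<union> A) ` {T. T \<subseteq> P - A \<and> card T = m - card A}"
  proof (rule set_eqI, rule iffI)
    fix S assume "S \<in> {S. S \<subseteq> P \<and> card S = m \<and> A \<subseteq> S}"
    hence S: "S \<subseteq> P" "card S = m" "A \<subseteq> S" by auto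
    have fS: "finite S" using S fP finite_subset by blast
    have "card (S - A) = m - card A" using S fA by (simp add: card_Diff_subset)
    moreover have "S = (S - A) \<union> A" using S by auto
    ultimately show "S \<in> (\<lambda>T. T \<union> A) ` {T. T \<subseteq> P - A \<and> card T = m - card A}"
      using S by (intro image_eqI[of _ _ "S - A"]) auto
  next
    fix S assume "S \<in> (\<lambda>T. T \<union> A) ` {T. T \<subseteq> P - A \<and> card T = m - card A}"
    then obtain T where T: "T \<subseteq> P - A" "card T = m - card A" "S = T \<union> A" by auto
    have fT: "finite T" using T fP finite_subset by blast
    have dj: "T \<inter> A = {}" using T by blast
    have "card S = card T + card A" using T fT fA dj by (simp add: card_Un_disjoint)
    thus "S \<in> {S. S \<subseteq> P \<and> card S = m \<and> A \<subseteq> S}" using T AP le by auto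
  qed
  have inj: "inj_on (\<lambda>T. T \<union> A) {T. T \<subseteq> P - A \<and> card T = m - card A}"
    by (rule inj_onI) auto
  have "card {S. S \<subseteq> P \<and> card S = m \<and> A \<subseteq> S} = card {T. T \<subseteq> P - A \<and> card T = m - card A}"
    unfolding eq using inj by (rule card_image)
  also have "\<dots> = card (P - A) choose (m - card A)" using fP by (simp add: n_subsets)
  also have "card (P - A) = card P - card A" using AP fA by (simp add: card_Diff_subset)
  finally show ?thesis .
qed

theorem theorem2:
  fixes P :: "'p set" and B :: "'b set" and I :: "('p \<times> 'b) set"
    and n \<alpha> v \<rho> k M :: nat
  assumes "FR_code P B I n \<alpha> v \<rho>"
    and "1 \<le> k" and "k \<le> n"
    and "1 \<le> M" and "M \<le> v"
    and "M \<le> file_size P B I k"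
  shows "int k \<ge> \<lceil>real n * real ((M - 1) choose \<alpha>) / real (v choose \<alpha>)\<rceil> + 1"
proof -
  define m where "m = M - 1"
  define N where "N b = {p\<in>P. (p, b) \<in> I}" for b
  have fP: "finite P" and fB: "finite B" and cB: "card B = n" and cP: "card P = v"
    and cN: "\<And>b. b \<in> B \<Longrightarrow> card (N b) = \<alpha>"
    using assms(1) unfolding FR_code_def N_def by auto
  have NP: "N b \<subseteq> P" for b unfolding N_def by auto
  have Bne: "B \<noteq> {}" using cB assms(2,3) by auto
  then obtain b0 where b0: "b0 \<in> B" by auto
  have av: "\<alpha> \<le> v" using cN[OF b0] NP[of b0] fP cP card_mono by metis
  show ?thesis
  proof (cases "\<alpha> \<le> m")
    case False
    hence "(M - 1) choose \<alpha> = 0" unfolding m_def by simp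
    hence z: "real n * real ((M - 1) choose \<alpha>) / real (v choose \<alpha>) = 0" by simp
    show ?thesis unfolding z using assms(2) by simp
  next
    case True
    have mv: "m \<le> v" using assms(5) unfolding m_def by simp
    define Ss where "Ss = {S. S \<subseteq> P \<and> card S = m}"
    have fSs: "finite Ss" unfolding Ss_def using fP by simp
    have cSs: "card Ss = v choose m" unfolding Ss_def using fP cP by (simp add: n_subsets)
    have bound: "card {b\<in>B. N b \<subseteq> S} \<le> k - 1" if S: "S \<in> Ss" for S
    proof (rule ccontr)
      assume "\<not> ?thesis"
      hence "k \<le> card {b\<in>B. N b \<subseteq> S}" by simp
      then obtain K where K: "K \<subseteq> {b\<in>B. N b \<subseteq> S}" "card K = k" "finite K"
        by (rule obtain_subset_with_card_n)
      have mem: "K \<in> {K. K \<subseteq> B \<and> card K = k}" using K by auto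
      have fin: "finite {K. K \<subseteq> B \<and> card K = k}" using fB by simp
      have "file_size P B I k \<le> card {p\<in>P. \<exists>b\<in>K. (p, b) \<in> I}"
        unfolding file_size_def using fin mem by (intro Min_le) auto
      also have "\<dots> \<le> card S"
      proof (rule card_mono)
        show "finite S" using S fP finite_subset unfolding Ss_def by blast
        show "{p\<in>P. \<exists>b\<in>K. (p, b) \<in> I} \<subseteq> S" using K unfolding N_def by blast
      qed
      also have "card S = m" using S unfolding Ss_def by simp
      finally show False using assms(4,6) unfolding m_def by simp
    qed
    have "(\<Sum>S\<in>Ss. card {b\<in>B. N b \<subseteq> S}) = (\<Sum>S\<in>Ss. \<Sum>b\<in>B. if N b \<subseteq> S then 1 else 0)"
      using fB by (simp add: sum.If_cases Int_def)
    also have "\<dots> = (\<Sum>b\<in>B. \<Sum>S\<in>Ss. if N b \<subseteq> S then 1 else 0)" by (rule sum.swap)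
    also have "\<dots> = (\<Sum>b\<in>B. card {S\<in>Ss. N b \<subseteq> S})"
      using fSs by (simp add: sum.If_cases Int_def)
    also have "\<dots> = (\<Sum>b\<in>B. (v - \<alpha>) choose (m - \<alpha>))"
    proof (rule sum.cong)
      fix b assume b: "b \<in> B"
      have "{S\<in>Ss. N b \<subseteq> S} = {S. S \<subseteq> P \<and> card S = m \<and> N b \<subseteq> S}" unfolding Ss_def by auto
      thus "card {S\<in>Ss. N b \<subseteq> S} = (v - \<alpha>) choose (m - \<alpha>)"
        using card_supersets[OF fP NP[of b], of m] cN[OF b] cP True by simp
    qed simp
    also have "\<dots> = n * ((v - \<alpha>) choose (m - \<alpha>))" using cB by simp
    finally have eqs: "(\<Sum>S\<in>Ss. card {b\<in>B. N b \<subseteq> S}) = n * ((v - \<alpha>) choose (m - \<alpha>))" .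
    have "(\<Sum>S\<in>Ss. card {b\<in>B. N b \<subseteq> S}) \<le> (\<Sum>S\<in>Ss. k - 1)" by (rule sum_mono) (rule bound)
    hence ineq: "n * ((v - \<alpha>) choose (m - \<alpha>)) \<le> (v choose m) * (k - 1)" using eqs cSs by simp
    have cm: "(v choose m) * (m choose \<alpha>) = (v choose \<alpha>) * ((v - \<alpha>) choose (m - \<alpha>))"
      using choose_mult[OF True mv] .
    have "n * (m choose \<alpha>) * ((v - \<alpha>) choose (m - \<alpha>)) \<le> (v choose m) * (k - 1) * (m choose \<alpha>)"
      using mult_le_mono1[OF ineq, of "m choose \<alpha>"] by (simp add: ac_simps)
    also have "\<dots> = (k - 1) * (v choose \<alpha>) * ((v - \<alpha>) choose (m - \<alpha>))"
      using cm by (metis mult.assoc mult.commute)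
    finally have "n * (m choose \<alpha>) \<le> (k - 1) * (v choose \<alpha>)"
    proof -
      have "0 < (v - \<alpha>) choose (m - \<alpha>)" using mv by (simp add: zero_less_binomial_iff)
      thus "n * (m choose \<alpha>) * ((v - \<alpha>) choose (m - \<alpha>)) \<le> (k - 1) * (v choose \<alpha>) * ((v - \<alpha>) choose (m - \<alpha>)) \<Longrightarrow> n * (m choose \<alpha>) \<le> (k - 1) * (v choose \<alpha>)"
        by simp
    qed
    hence r: "real n * real (m choose \<alpha>) \<le> real (k - 1) * real (v choose \<alpha>)"
      by (metis of_nat_le_iff of_nat_mult)
    have pos: "real (v choose \<alpha>) > 0" using av by simp
    have "real n * real (m choose \<alpha>) / real (v choose \<alpha>) \<le> real (k - 1)"
      using r pos by (simp add: divide_le_eq)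
    hence "real n * real (m choose \<alpha>) / real (v choose \<alpha>) \<le> of_int (int k - 1)"
      using assms(2) by (simp add: of_nat_diff)
    hence "\<lceil>real n * real (m choose \<alpha>) / real (v choose \<alpha>)\<rceil> \<le> int k - 1"
      by (intro ceiling_le) simp
    thus ?thesis unfolding m_def by simp
  qed
qed

end
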